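(* Let $U\in\mathbb{R}^{n\times d}$, let $\mathbf{x}_*\in\mathbb{R}^d$ be an $s$-sparse signal, and let $\mathbf{y}=U\mathbf{x}_*$ (noiseless measurements). Assume $U$ satisfies \[ \gamma := \delta_s + \sqrt{2}\,\theta_{s,s} + \delta_{3s} < 1 . \] Let $\Delta_1,\Delta_2,\ldots$ be a sequence with $\|\mathbf{x}_1-\mathbf{x}_*\|_2\le \Delta_1$ and $\Delta_{t+1} = (\delta_s+\sqrt{2}\theta_{s,s}+\delta_{3s})\Delta_t$. If Algorithm 1 is run with $\lambda_t = \frac{\delta_s+\sqrt{2}\theta_{s,s}}{\sqrt{s}}\Delta_t$, then for all $t\ge 0$: (i) $|\mathcal{S}_{t+1}\setminus \mathcal{S}_*|\le s$, and (ii) $\|\mathbf{x}_{t+1}-\mathbf{x}_*\|_2\le \gamma^t\Delta_1$.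
   Context: For $\mathbf{x}\in\mathbb{R}^d$, $\mathcal{S}(\mathbf{x})=\{i:[\mathbf{x}]_i\neq 0\}$ is its support; $\mathbf{x}$ is $s$-sparse if $|\mathcal{S}(\mathbf{x})|\le s$. For $\mathcal T\subseteq\{1,\dots,d\}$, $U_{\mathcal T}$ is the submatrix of $U$ with columns indexed by $\mathcal T$. The restricted isometry constant $\delta_s\ge0$ is the smallest constant such that for every $\mathcal T$ with $|\mathcal T|\le s$ and every $\mathbf{v}\in\mathbb{R}^{|\mathcal T|}$, $(1-\delta_s)\|\mathbf{v}\|_2^2\le\|U_{\mathcal T}\mathbf{v}\|_2^2\le(1+\delta_s)\|\mathbf{v}\|_2^2$. The restricted orthogonality constant $\theta_{s,s}$ (with $2s\le d$) is the smallest constant such that for all disjoint $\mathcal T,\mathcal T'$ with $|\mathcal T|,|\mathcal T'|\le s$ and all $\mathbf{v}\in\mathbb{R}^{|\mathcal T|},\mathbf{v}'\in\mathbb{R}^{|\mathcal T'|}$, $|\langle U_{\mathcal T}\mathbf{v},U_{\mathcal T'}\mathbf{v}'\rangle|\le\theta_{s,s}\|\mathbf{v}\|_2\|\mathbf{v}'\|_2$. Algorithm 1 (homotopy proximal mapping): given $U$, $\mathbf{y}$ and parameters $\lambda_1,\lambda_2,\ldots>0$, set $\mathbf{x}_1=0$ and for $t=1,2,\ldots$ compute $\widehat{\mathbf{x}}_t=\mathbf{x}_t-U^\top(U\mathbf{x}_t-\mathbf{y})$ and $\mathbf{x}_{t+1}=\mathrm{sign}(\widehat{\mathbf{x}}_t)[|\widehat{\mathbf{x}}_t|-\lambda_t]_+$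 (componentwise soft-thresholding; equivalently $\mathbf{x}_{t+1}=\arg\min_{\mathbf{x}}\frac12\|\mathbf{x}-\widehat{\mathbf{x}}_t\|_2^2+\lambda_t\|\mathbf{x}\|_1$). $\mathcal{S}_t=\mathcal{S}(\mathbf{x}_t)$ and $\mathcal{S}_*=\mathcal{S}(\mathbf{x}_* )$. *)

theory Defs
  imports "HOL-Analysis.Analysis"
begin

definition supp :: "real ^ 'd \<Rightarrow> 'd set" where
  "supp x = {i. x $ i \<noteq> 0}"

text \<open>A vector v in R^|T| embedded as a vector of R^d supported in T; then U_T v = U *v x
  and the norms agree.\<close>

definition ric :: "real ^ 'd ^ 'n \<Rightarrow> nat \<Rightarrow> real" where
  "ric U s = Inf {c. c \<ge> 0 \<and> (\<forall>x :: real ^ 'd. card (supp x) \<le> s \<longrightarrow>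
       (1 - c) * (norm x)\<^sup>2 \<le> (norm (U *v x))\<^sup>2 \<and> (norm (U *v x))\<^sup>2 \<le> (1 + c) * (norm x)\<^sup>2)}"

definition roc :: "real ^ 'd ^ 'n \<Rightarrow> nat \<Rightarrow> real" where
  "roc U s = Inf {c. c \<ge> 0 \<and> (\<forall>x x' :: real ^ 'd. card (supp x) \<le> s \<longrightarrow> card (supp x') \<le> s
       \<longrightarrow> supp x \<inter> supp x' = {} \<longrightarrow>
       \<bar>(U *v x) \<bullet> (U *v x')\<bar> \<le> c * norm x * norm x')}"

definition soft :: "real ^ 'd \<Rightarrow> real \<Rightarrow> real ^ 'd" where
  "soft z l = (\<chi> i. sgn (z $ i) * max (\<bar>z $ i\<bar> - l) 0)"

end

theory Submission
  imports Defs
begin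

lemma inner_vec_sum: "(u::real^'d) \<bullet> v = (\<Sum>i\<in>UNIV. u$i * v$i)"
  by (simp add: inner_vec_def)

lemma sq_norm_sum: "(norm (u::real^'d))\<^sup>2 = (\<Sum>i\<in>UNIV. (u$i)\<^sup>2)"
proof -
  have "(norm u)\<^sup>2 = u \<bullet> u" by (rule power2_norm_eq_inner)
  also have "\<dots> = (\<Sum>i\<in>UNIV. (u$i)\<^sup>2)" unfolding inner_vec_def by (simp add: power2_eq_square)
  finally show ?thesis .
qed

lemma adj: "(U *v h) \<bullet> (w::real^'n) = (h::real^'d) \<bullet> (transpose U *v w)"
proof -
  have "(U *v h) \<bullet> w = (\<Sum>j\<in>UNIV. \<Sum>i\<in>UNIV. U$j$i * h$i * w$j)"
    unfolding inner_vec_def matrix_vector_mult_def by (simp add: sum_distrib_right)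
  also have "\<dots> = (\<Sum>i\<in>UNIV. \<Sum>j\<in>UNIV. U$j$i * h$i * w$j)" by (rule sum.swap)
  also have "\<dots> = h \<bullet> (transpose U *v w)"
    unfolding inner_vec_def matrix_vector_mult_def transpose_def
    by (simp add: sum_distrib_left mult_ac)
  finally show ?thesis .
qed

lemma bnd: "\<exists>K>0. \<forall>x. norm ((U::real^'d^'n) *v x) \<le> norm x * K"
  using bounded_linear.pos_bounded[OF matrix_vector_mul_bounded_linear[of U]] by blast

lemma ric_ok:
  fixes U :: "real^'d^'n"
  shows "ric U k \<ge> 0"
   and "card (supp x) \<le> k \<Longrightarrow> (1 - ric U k) * (norm x)\<^sup>2 \<le> (norm (U *v x))\<^sup>2
        \<and> (norm (U *v x))\<^sup>2 \<le> (1 + ric U k) * (norm x)\<^sup>2"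
proof -
  define S where "S = {c. c \<ge> 0 \<and> (\<forall>x :: real ^ 'd. card (supp x) \<le> k \<longrightarrow>
       (1 - c) * (norm x)\<^sup>2 \<le> (norm (U *v x))\<^sup>2 \<and> (norm (U *v x))\<^sup>2 \<le> (1 + c) * (norm x)\<^sup>2)}"
  have r: "ric U k = Inf S" unfolding S_def ric_def by simp
  obtain K where K: "K > 0" "\<And>x. norm (U *v x) \<le> norm x * K" using bnd by blast
  have "max 1 (K\<^sup>2) \<in> S"
  proof -
    { fix x :: "real^'d"
      have "(1 - max 1 (K\<^sup>2)) * (norm x)\<^sup>2 \<le> 0" by (simp add: mult_nonpos_nonneg)
      also have "0 \<le> (norm (U *v x))\<^sup>2" by simp
      finally have a: "(1 - max 1 (K\<^sup>2)) * (norm x)\<^sup>2 \<le> (norm (U *v x))\<^sup>2" .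
      have "(norm (U *v x))\<^sup>2 \<le> (norm x * K)\<^sup>2" using K(2)[of x] by (simp add: power_mono)
      also have "\<dots> = K\<^sup>2 * (norm x)\<^sup>2" by (simp add: power_mult_distrib)
      also have "\<dots> \<le> (1 + max 1 (K\<^sup>2)) * (norm x)\<^sup>2" by (intro mult_right_mono) auto
      finally have "(norm (U *v x))\<^sup>2 \<le> (1 + max 1 (K\<^sup>2)) * (norm x)\<^sup>2" .
      note a this }
    then show ?thesis unfolding S_def by auto
  qed
  hence ne: "S \<noteq> {}" by blast
  show "ric U k \<ge> 0" unfolding r by (rule cInf_greatest[OF ne]) (auto simp: S_def)
  assume ck: "card (supp x) \<le> k"
  show "(1 - ric U k) * (norm x)\<^sup>2 \<le> (norm (U *v x))\<^sup>2
        \<and> (norm (U *v x))\<^sup>2 \<le> (1 + ric U k) * (norm x)\<^sup>2"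
  proof (cases "x = 0")
    case True thus ?thesis by simp
  next
    case False
    hence p: "(norm x)\<^sup>2 > 0" by simp
    have l: "Inf S \<ge> 1 - (norm (U *v x))\<^sup>2 / (norm x)\<^sup>2"
    proof (rule cInf_greatest[OF ne])
      fix c assume "c \<in> S"
      hence "(1 - c) * (norm x)\<^sup>2 \<le> (norm (U *v x))\<^sup>2" using ck unfolding S_def by blast
      thus "1 - (norm (U *v x))\<^sup>2 / (norm x)\<^sup>2 \<le> c" using p by (simp add: field_simps)
    qed
    have u: "Inf S \<ge> (norm (U *v x))\<^sup>2 / (norm x)\<^sup>2 - 1"
    proof (rule cInf_greatest[OF ne])
      fix c assume "c \<in> S"
      hence "(norm (U *v x))\<^sup>2 \<le> (1 + c) * (norm x)\<^sup>2" using ck unfolding S_def by blast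
      thus "(norm (U *v x))\<^sup>2 / (norm x)\<^sup>2 - 1 \<le> c" using p by (simp add: field_simps)
    qed
    show ?thesis using l u p unfolding r by (simp add: field_simps)
  qed
qed

lemma roc_ok:
  fixes U :: "real^'d^'n"
  shows "roc U k \<ge> 0"
   and "card (supp x) \<le> k \<Longrightarrow> card (supp x') \<le> k \<Longrightarrow> supp x \<inter> supp x' = {} \<Longrightarrow>
        \<bar>(U *v x) \<bullet> (U *v x')\<bar> \<le> roc U k * norm x * norm x'"
proof -
  define S where "S = {c. c \<ge> 0 \<and> (\<forall>x x' :: real ^ 'd. card (supp x) \<le> k \<longrightarrow> card (supp x') \<le> k
       \<longrightarrow> supp x \<inter> supp x' = {} \<longrightarrow>
       \<bar>(U *v x) \<bullet> (U *v x')\<bar> \<le> c * norm x * norm x')}"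
  have r: "roc U k = Inf S" unfolding S_def roc_def by simp
  obtain K where K: "K > 0" "\<And>x. norm (U *v x) \<le> norm x * K" using bnd by blast
  have "K\<^sup>2 \<in> S"
  proof -
    { fix x x' :: "real^'d"
      have "\<bar>(U *v x) \<bullet> (U *v x')\<bar> \<le> norm (U *v x) * norm (U *v x')" by (rule Cauchy_Schwarz_ineq2)
      also have "\<dots> \<le> (norm x * K) * (norm x' * K)" using K by (intro mult_mono) auto
      also have "\<dots> = K\<^sup>2 * norm x * norm x'" by (simp add: power2_eq_square)
      finally have "\<bar>(U *v x) \<bullet> (U *v x')\<bar> \<le> K\<^sup>2 * norm x * norm x'" . }
    then show ?thesis unfolding S_def by auto
  qed
  hence ne: "S \<noteq> {}" by blast
  show "roc U k \<ge> 0" unfolding r by (rule cInf_greatest[OF ne]) (auto simp: S_def)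
  assume ck: "card (supp x) \<le> k" "card (supp x') \<le> k" "supp x \<inter> supp x' = {}"
  obtain c0 where c0: "c0 \<in> S" using ne by blast
  show "\<bar>(U *v x) \<bullet> (U *v x')\<bar> \<le> roc U k * norm x * norm x'"
  proof (cases "norm x * norm x' = 0")
    case True
    have "\<bar>(U *v x) \<bullet> (U *v x')\<bar> \<le> c0 * norm x * norm x'" using c0 ck unfolding S_def by blast
    thus ?thesis using True \<open>roc U k \<ge> 0\<close> by auto
  next
    case False
    hence p: "norm x * norm x' > 0" by (simp add: less_le)
    have l: "Inf S \<ge> \<bar>(U *v x) \<bullet> (U *v x')\<bar> / (norm x * norm x')"
    proof (rule cInf_greatest[OF ne])
      fix c assume "c \<in> S"
      hence "\<bar>(U *v x) \<bullet> (U *v x')\<bar> \<le> c * (norm x * norm x')" using ck unfolding S_def by (simp add: mult.assoc)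
      thus "\<bar>(U *v x) \<bullet> (U *v x')\<bar> / (norm x * norm x') \<le> c" using p by (simp add: field_simps)
    qed
    show ?thesis using l p unfolding r by (simp add: field_simps)
  qed
qed

lemma supp_add: "supp (a + b) \<subseteq> supp a \<union> supp b" by (auto simp: supp_def)
lemma supp_diff: "supp (a - b) \<subseteq> supp a \<union> supp b" by (auto simp: supp_def)
lemma supp_scale: "supp (c *\<^sub>R a) \<subseteq> supp a" by (auto simp: supp_def)

lemma rip_inner:
  fixes U :: "real^'d^'n"
  assumes "card (supp u \<union> supp v) \<le> k"
  shows "\<bar>u \<bullet> v - (U *v u) \<bullet> (U *v v)\<bar> \<le> ric U k * norm u * norm v"
proof (cases "u = 0 \<or> v = 0")
  case True thus ?thesis using ric_ok(1)[of U k] by auto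
next
  case False
  define m where "m = norm u * norm v"
  have mp: "m > 0" using False unfolding m_def by auto
  define a where "a = norm v *\<^sub>R u"
  define b where "b = norm u *\<^sub>R v"
  have na: "(norm a)\<^sup>2 = m\<^sup>2" "(norm b)\<^sup>2 = m\<^sup>2" unfolding a_def b_def m_def
    by (auto simp: power_mult_distrib mult.commute)
  have ab: "a \<bullet> b = m * (u \<bullet> v)" unfolding a_def b_def m_def by (simp add: mult_ac)
  have Uab: "(U *v a) \<bullet> (U *v b) = m * ((U *v u) \<bullet> (U *v v))" unfolding a_def b_def m_def
    by (simp add: matrix_vector_mult_scaleR mult_ac)
  have sa: "supp a \<subseteq> supp u \<union> supp v" "supp b \<subseteq> supp u \<union> supp v"
    using supp_scale unfolding a_def b_def by blast+
  have c1: "card (supp (a + b)) \<le> k"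
    by (rule le_trans[OF card_mono assms]) (use supp_add[of a b] sa in auto)
  have c2: "card (supp (a - b)) \<le> k"
    by (rule le_trans[OF card_mono assms]) (use supp_diff[of a b] sa in auto)
  define d where "d = ric U k"
  note r1 = ric_ok(2)[where U=U, OF c1, folded d_def]
  note r2 = ric_ok(2)[where U=U, OF c2, folded d_def]
  have e1: "(norm (a + b))\<^sup>2 = (norm a)\<^sup>2 + 2 * (a \<bullet> b) + (norm b)\<^sup>2"
    by (simp add: power2_norm_eq_inner inner_add_left inner_add_right inner_commute)
  have e2: "(norm (a - b))\<^sup>2 = (norm a)\<^sup>2 - 2 * (a \<bullet> b) + (norm b)\<^sup>2"
    by (simp add: power2_norm_eq_inner inner_diff_left inner_diff_right inner_commute)
  have e3: "(norm (U *v (a + b)))\<^sup>2 = (norm (U *v a))\<^sup>2 + 2 * ((U *v a) \<bullet> (U *v b)) + (norm (U *v b))\<^sup>2"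
    by (simp add: matrix_vector_right_distrib power2_norm_eq_inner inner_add_left inner_add_right inner_commute)
  have e4: "(norm (U *v (a - b)))\<^sup>2 = (norm (U *v a))\<^sup>2 - 2 * ((U *v a) \<bullet> (U *v b)) + (norm (U *v b))\<^sup>2"
    by (simp add: matrix_vector_mult_diff_distrib power2_norm_eq_inner inner_diff_left inner_diff_right inner_commute)
  have "\<bar>a \<bullet> b - (U *v a) \<bullet> (U *v b)\<bar> \<le> d * m\<^sup>2"
    using r1 r2 e1 e2 e3 e4 na by (auto simp: algebra_simps abs_le_iff)
  hence "m * \<bar>u \<bullet> v - (U *v u) \<bullet> (U *v v)\<bar> \<le> m * (d * m)"
    unfolding ab Uab using mp by (simp add: abs_mult power2_eq_square right_diff_distrib[symmetric] mult_ac)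
  hence "\<bar>u \<bullet> v - (U *v u) \<bullet> (U *v v)\<bar> \<le> d * m" using mp by simp
  thus ?thesis unfolding d_def m_def by (simp add: mult.assoc)
qed

definition restr :: "'d set \<Rightarrow> real^'d \<Rightarrow> real^'d" where
  "restr A u = (\<chi> i. if i \<in> A then u$i else 0)"

lemma supp_restr: "supp (restr A u) = A \<inter> supp u"
  by (auto simp: supp_def restr_def)

lemma inner_restr: "(restr A u) \<bullet> w = (\<Sum>i\<in>A. u$i * w$i)"
proof -
  have "(restr A u) \<bullet> w = (\<Sum>i\<in>UNIV. if i \<in> A then u$i * w$i else 0)"
    unfolding inner_vec_sum restr_def by (rule sum.cong) auto
  also have "\<dots> = (\<Sum>i\<in>UNIV \<inter> A. u$i * w$i)" by (rule sum.inter_restrict[symmetric]) simp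
  finally show ?thesis by simp
qed

lemma sq_norm_restr: "(norm (restr A u))\<^sup>2 = (\<Sum>i\<in>A. (u$i)\<^sup>2)"
  unfolding power2_norm_eq_inner inner_restr by (simp add: restr_def power2_eq_square)

lemma sq_norm_restr2:
  assumes "A \<inter> B = {}"
  shows "(norm (restr A u))\<^sup>2 + (norm (restr B u))\<^sup>2 \<le> (norm u)\<^sup>2"
proof -
  have "(norm (restr A u))\<^sup>2 + (norm (restr B u))\<^sup>2 = (\<Sum>i\<in>A \<union> B. (u$i)\<^sup>2)"
    unfolding sq_norm_restr using assms by (simp add: sum.union_disjoint)
  also have "\<dots> \<le> (\<Sum>i\<in>UNIV. (u$i)\<^sup>2)" by (rule sum_mono2) auto
  finally show ?thesis unfolding sq_norm_sum .
qed

lemma norm_restr_le: "norm (restr A u) \<le> norm u"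
proof -
  have "(norm (restr A u))\<^sup>2 + (norm (restr {} u))\<^sup>2 \<le> (norm u)\<^sup>2" by (rule sq_norm_restr2) simp
  hence "(norm (restr A u))\<^sup>2 \<le> (norm u)\<^sup>2" by (smt (verit) zero_le_power2)
  thus ?thesis by (rule power2_le_imp_le) simp
qed

lemma soft_nth: "soft z l $ i = sgn (z$i) * max (\<bar>z$i\<bar> - l) 0"
  by (simp add: soft_def)

lemma soft_coord:
  fixes a q l :: real
  assumes "l \<ge> 0"
  shows "(a - sgn a * max (\<bar>a\<bar> - l) 0) * (q - sgn a * max (\<bar>a\<bar> - l) 0)
         \<le> l * (\<bar>q\<bar> - \<bar>sgn a * max (\<bar>a\<bar> - l) 0\<bar>)"
proof (cases "a > l")
  case True
  hence "sgn a * max (\<bar>a\<bar> - l) 0 = a - l" using assms by (auto simp: sgn_if)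
  thus ?thesis using True assms by (simp add: algebra_simps) (smt (verit) abs_ge_self mult_left_mono)
next
  case F1: False
  show ?thesis
  proof (cases "a < - l")
    case True
    hence "sgn a * max (\<bar>a\<bar> - l) 0 = a + l" using assms by (auto simp: sgn_if)
    moreover have "- l * q \<le> l * \<bar>q\<bar>" using assms
      by (metis abs_ge_minus_self minus_mult_commute mult_left_mono)
    ultimately show ?thesis using True assms by (simp add: algebra_simps)
  next
    case False
    hence "sgn a * max (\<bar>a\<bar> - l) 0 = 0" using F1 by auto
    moreover have "a * q \<le> l * \<bar>q\<bar>"
    proof -
      have "a * q \<le> \<bar>a\<bar> * \<bar>q\<bar>" by (metis abs_ge_self abs_mult)
      also have "\<dots> \<le> l * \<bar>q\<bar>" using F1 False by (intro mult_right_mono) auto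
      finally show ?thesis .
    qed
    ultimately show ?thesis by (simp only:) simp
  qed
qed

lemma soft_supp:
  assumes "l \<ge> 0"
  shows "i \<in> supp (soft z l) \<longleftrightarrow> \<bar>z$i\<bar> > l"
  using assms by (auto simp: supp_def soft_nth sgn_if)

lemma card_supp_le: "card (supp (x::real^'d)) \<le> card (UNIV::'d set)"
  by (rule card_mono) auto

lemma step:
  fixes U :: "real^'d^'n" and xs xt xn :: "real^'d" and lam Dt :: real and s :: nat
  assumes S: "card (supp xs) \<le> s" and sp: "s > 0"
    and B: "card (supp xt - supp xs) \<le> s"
    and ne: "norm (xt - xs) \<le> Dt"
    and lam: "lam = (ric U s + sqrt 2 * roc U s) / sqrt (real s) * Dt"
    and xn: "xn = soft (xt - transpose U *v (U *v xt - U *v xs)) lam"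
  shows "card (supp xn - supp xs) \<le> s \<and>
         norm (xn - xs) \<le> (ric U s + sqrt 2 * roc U s + ric U (3 * s)) * Dt"
proof -
  define e where "e = xt - xs"
  define z where "z = e - transpose U *v (U *v e)"
  define \<rho> where "\<rho> = ric U s + sqrt 2 * roc U s"
  have xh: "xt - transpose U *v (U *v xt - U *v xs) = xs + z"
    unfolding z_def e_def by (simp add: matrix_vector_mult_diff_distrib algebra_simps)
  have Dt: "Dt \<ge> 0" using ne norm_ge_zero order_trans by blast
  have rho0: "\<rho> \<ge> 0" unfolding \<rho>_def using ric_ok(1)[of U s] roc_ok(1)[of U s] by simp
  have lam0: "lam \<ge> 0" unfolding lam using rho0 Dt \<rho>_def by simp
  have lams: "lam * sqrt (real s) = \<rho> * Dt" unfolding lam \<rho>_def using sp by simp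
  have xn': "xn = soft (xs + z) lam" using xn xh by simp
  define Ss where "Ss = supp xs"
  define C where "C = supp xn - Ss"
  have Cchar: "i \<in> C \<longleftrightarrow> i \<notin> Ss \<and> \<bar>z$i\<bar> > lam" for i
  proof -
    have "i \<in> C \<longleftrightarrow> i \<in> supp (soft (xs + z) lam) \<and> i \<notin> Ss" by (simp add: C_def xn')
    also have "\<dots> \<longleftrightarrow> lam < \<bar>(xs + z)$i\<bar> \<and> xs$i = 0"
      using soft_supp[OF lam0, of i "xs + z"] unfolding Ss_def supp_def by auto
    finally show ?thesis unfolding Ss_def supp_def by auto
  qed
  have supp_e: "supp e \<subseteq> supp xt \<union> Ss" unfolding e_def Ss_def by (rule supp_diff)
  have cardC: "card C \<le> s"
  proof (rule ccontr)
    assume "\<not> card C \<le> s"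
    hence "s \<le> card C" by simp
    then obtain T where T: "T \<subseteq> C" "card T = s" "finite T" by (rule obtain_subset_with_card_n)
    have Tne: "T \<noteq> {}" using T sp by auto
    have TS: "T \<inter> Ss = {}" using T Cchar by blast
    define v where "v = restr T z"
    have nv: "(norm v)\<^sup>2 = (\<Sum>i\<in>T. (z$i)\<^sup>2)" unfolding v_def by (rule sq_norm_restr)
    have "(\<Sum>i\<in>T. lam\<^sup>2) < (\<Sum>i\<in>T. (z$i)\<^sup>2)"
    proof (rule sum_strict_mono[OF T(3) Tne])
      fix i assume "i \<in> T"
      hence "\<bar>z$i\<bar> > lam" using T Cchar by blast
      hence "lam\<^sup>2 < \<bar>z$i\<bar>\<^sup>2" using lam0 by (intro power_strict_mono) auto
      thus "lam\<^sup>2 < (z$i)\<^sup>2" by simp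
    qed
    hence big: "(norm v)\<^sup>2 > real s * lam\<^sup>2" using nv T(2) by simp
    have "v \<bullet> z = (\<Sum>i\<in>T. (z$i)\<^sup>2)" unfolding v_def inner_restr by (simp add: power2_eq_square)
    hence vz: "v \<bullet> z = (norm v)\<^sup>2" using nv by simp
    define e1 where "e1 = restr T e"
    define e2 where "e2 = restr Ss e"
    define e3 where "e3 = restr (- (T \<union> Ss)) e"
    have esplit: "e = e1 + e2 + e3" unfolding e1_def e2_def e3_def restr_def
      using TS by (auto simp: vec_eq_iff)
    have ve: "v \<bullet> e = v \<bullet> e1" unfolding v_def inner_restr e1_def
      by (intro sum.cong) (auto simp: restr_def)
    have vz2: "v \<bullet> z = (v \<bullet> e1 - (U *v v) \<bullet> (U *v e1)) - (U *v v) \<bullet> (U *v e2) - (U *v v) \<bullet> (U *v e3)"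
    proof -
      have "v \<bullet> z = v \<bullet> e - (U *v v) \<bullet> (U *v e)" unfolding z_def by (simp add: inner_diff_right adj)
      also have "\<dots> = v \<bullet> e1 - (U *v v) \<bullet> (U *v (e1 + e2 + e3))" using ve esplit by simp
      finally show ?thesis by (simp add: matrix_vector_right_distrib inner_add_right)
    qed
    have sv: "supp v \<subseteq> T" unfolding v_def supp_restr by blast
    have cT: "card (supp v) \<le> s" using card_mono[OF T(3) sv] T(2) by simp
    have b1: "\<bar>v \<bullet> e1 - (U *v v) \<bullet> (U *v e1)\<bar> \<le> ric U s * norm v * norm e1"
    proof (rule rip_inner)
      have "supp v \<union> supp e1 \<subseteq> T" using sv unfolding e1_def supp_restr by blast
      thus "card (supp v \<union> supp e1) \<le> s" using card_mono[OF T(3)] T(2) by metis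
    qed
    have b2: "\<bar>(U *v v) \<bullet> (U *v e2)\<bar> \<le> roc U s * norm v * norm e2"
    proof (rule roc_ok(2)[OF cT])
      show "card (supp e2) \<le> s" unfolding e2_def supp_restr
        using card_mono[of Ss "Ss \<inter> supp e"] S Ss_def by simp
      show "supp v \<inter> supp e2 = {}" using sv TS unfolding e2_def supp_restr by blast
    qed
    have b3: "\<bar>(U *v v) \<bullet> (U *v e3)\<bar> \<le> roc U s * norm v * norm e3"
    proof (rule roc_ok(2)[OF cT])
      have "supp e3 \<subseteq> supp xt - supp xs" unfolding e3_def supp_restr using supp_e Ss_def by blast
      thus "card (supp e3) \<le> s" using card_mono[of "supp xt - supp xs" "supp e3"] B by simp
      show "supp v \<inter> supp e3 = {}" using sv unfolding e3_def supp_restr by blast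
    qed
    have n1: "norm e1 \<le> norm e" unfolding e1_def by (rule norm_restr_le)
    have n23: "norm e2 + norm e3 \<le> sqrt 2 * norm e"
    proof (rule power2_le_imp_le)
      have "(norm e2)\<^sup>2 + (norm e3)\<^sup>2 \<le> (norm e)\<^sup>2" unfolding e2_def e3_def
        by (rule sq_norm_restr2) blast
      moreover have "(norm e2 + norm e3)\<^sup>2 \<le> 2 * ((norm e2)\<^sup>2 + (norm e3)\<^sup>2)"
        by (smt (verit) sum_squares_bound power2_sum zero_le_power2 power2_diff)
      ultimately show "(norm e2 + norm e3)\<^sup>2 \<le> (sqrt 2 * norm e)\<^sup>2"
        by (simp add: power_mult_distrib)
    qed simp
    have th0: "roc U s \<ge> 0" by (rule roc_ok(1))
    have "(norm v)\<^sup>2 \<le> ric U s * norm v * norm e1 + roc U s * norm v * norm e2 + roc U s * norm v * norm e3"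
      using vz vz2 b1 b2 b3 by linarith
    also have "\<dots> = norm v * (ric U s * norm e1 + roc U s * (norm e2 + norm e3))" by (simp add: algebra_simps)
    also have "\<dots> \<le> norm v * (ric U s * norm e + roc U s * (sqrt 2 * norm e))"
      using n1 n23 th0 ric_ok(1)[of U s]
      by (intro mult_left_mono add_mono mult_left_mono) auto
    also have "\<dots> = norm v * (\<rho> * norm e)" unfolding \<rho>_def by (simp add: algebra_simps)
    also have "\<dots> \<le> norm v * (\<rho> * Dt)" using ne rho0 unfolding e_def
      by (intro mult_left_mono) auto
    finally have "(norm v)\<^sup>2 \<le> norm v * (\<rho> * Dt)" .
    moreover have "norm v > 0"
    proof -
      have "real s * lam\<^sup>2 \<ge> 0" by simp
      hence "(norm v)\<^sup>2 > 0" using big by linarith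
      thus ?thesis by (simp add: zero_less_power2)
    qed
    ultimately have "norm v \<le> \<rho> * Dt"
      by (simp add: power2_eq_square mult_le_cancel_left_pos)
    hence "(norm v)\<^sup>2 \<le> (\<rho> * Dt)\<^sup>2" by (intro power_mono) auto
    also have "\<dots> = real s * lam\<^sup>2" unfolding lams[symmetric] by (simp add: power_mult_distrib)
    finally show False using big by simp
  qed
  define h where "h = xn - xs"
  have coord: "(h$i)\<^sup>2 \<le> z$i * h$i + lam * (\<bar>xs$i\<bar> - \<bar>xn$i\<bar>)" for i
  proof -
    have "xn$i = sgn ((xs + z)$i) * max (\<bar>(xs + z)$i\<bar> - lam) 0" unfolding xn' soft_nth ..
    with soft_coord[OF lam0, of "(xs+z)$i" "xs$i"]
    have "((xs + z)$i - xn$i) * (xs$i - xn$i) \<le> lam * (\<bar>xs$i\<bar> - \<bar>xn$i\<bar>)" by simp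
    thus ?thesis unfolding h_def by (simp add: algebra_simps power2_eq_square)
  qed
  have "(norm h)\<^sup>2 \<le> (\<Sum>i\<in>UNIV. z$i * h$i + lam * (\<bar>xs$i\<bar> - \<bar>xn$i\<bar>))"
    unfolding sq_norm_sum by (rule sum_mono) (rule coord)
  also have "\<dots> = z \<bullet> h + lam * (\<Sum>i\<in>UNIV. \<bar>xs$i\<bar> - \<bar>xn$i\<bar>)"
    by (simp add: sum.distrib sum_distrib_left inner_vec_sum)
  finally have H1: "(norm h)\<^sup>2 \<le> z \<bullet> h + lam * (\<Sum>i\<in>UNIV. \<bar>xs$i\<bar> - \<bar>xn$i\<bar>)" .
  have "(\<Sum>i\<in>UNIV. \<bar>xs$i\<bar> - \<bar>xn$i\<bar>) \<le> (\<Sum>i\<in>UNIV. if i \<in> Ss then \<bar>h$i\<bar> else 0)"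
  proof (rule sum_mono)
    fix i
    show "\<bar>xs$i\<bar> - \<bar>xn$i\<bar> \<le> (if i \<in> Ss then \<bar>h$i\<bar> else 0)"
      unfolding h_def Ss_def supp_def by auto
  qed
  also have "\<dots> = (\<Sum>i\<in>Ss. \<bar>h$i\<bar>)" by (simp add: sum.If_cases)
  also have "\<dots> \<le> sqrt (real s) * norm h"
  proof (rule power2_le_imp_le)
    have "(\<Sum>i\<in>Ss. \<bar>h$i\<bar>)\<^sup>2 = (\<Sum>i\<in>Ss. 1 * \<bar>h$i\<bar>)\<^sup>2" by simp
    also have "\<dots> \<le> (\<Sum>i\<in>Ss. 1\<^sup>2) * (\<Sum>i\<in>Ss. \<bar>h$i\<bar>\<^sup>2)" by (rule Cauchy_Schwarz_ineq_sum)
    also have "\<dots> = real (card Ss) * (norm (restr Ss h))\<^sup>2" by (simp add: sq_norm_restr)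
    also have "\<dots> \<le> real s * (norm h)\<^sup>2"
      using S norm_restr_le[of Ss h] unfolding Ss_def
      by (intro mult_mono power_mono) auto
    also have "\<dots> = (sqrt (real s) * norm h)\<^sup>2" by (simp add: power_mult_distrib)
    finally show "(\<Sum>i\<in>Ss. \<bar>h$i\<bar>)\<^sup>2 \<le> (sqrt (real s) * norm h)\<^sup>2" .
  qed simp
  finally have H2: "(\<Sum>i\<in>UNIV. \<bar>xs$i\<bar> - \<bar>xn$i\<bar>) \<le> sqrt (real s) * norm h" .
  have tt: "(transpose U *v (U *v e)) \<bullet> h = (U *v e) \<bullet> (U *v h)"
    by (metis adj inner_commute)
  have zh: "z \<bullet> h = e \<bullet> h - (U *v e) \<bullet> (U *v h)"
    unfolding z_def inner_diff_left tt ..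
  have H3: "\<bar>e \<bullet> h - (U *v e) \<bullet> (U *v h)\<bar> \<le> ric U (3 * s) * norm e * norm h"
  proof (rule rip_inner)
    have sh: "supp h \<subseteq> C \<union> Ss" unfolding h_def C_def Ss_def using supp_diff[of xn xs] by blast
    have "supp e \<union> supp h \<subseteq> Ss \<union> (supp xt - supp xs) \<union> C" using sh supp_e Ss_def by blast
    hence "card (supp e \<union> supp h) \<le> card (Ss \<union> (supp xt - supp xs) \<union> C)" by (intro card_mono) auto
    also have "\<dots> \<le> card Ss + card (supp xt - supp xs) + card C"
      by (meson add_le_mono card_Un_le le_trans order_refl)
    also have "\<dots> \<le> 3 * s" using S B cardC Ss_def by simp
    finally show "card (supp e \<union> supp h) \<le> 3 * s" .
  qed
  have "(norm h)\<^sup>2 \<le> ric U (3 * s) * norm e * norm h + lam * (sqrt (real s) * norm h)"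
    using H1 H2 H3 zh lam0 mult_left_mono[OF H2 lam0] by linarith
  also have "\<dots> \<le> ric U (3 * s) * Dt * norm h + \<rho> * Dt * norm h"
    using ne ric_ok(1)[of U "3 * s"] unfolding e_def lams[symmetric]
    by (intro add_mono mult_right_mono mult_left_mono) (auto simp: mult_ac)
  also have "\<dots> = norm h * ((\<rho> + ric U (3 * s)) * Dt)" by (simp add: algebra_simps)
  finally have "(norm h)\<^sup>2 \<le> norm h * ((\<rho> + ric U (3 * s)) * Dt)" .
  hence "norm h \<le> (\<rho> + ric U (3 * s)) * Dt"
  proof (cases "norm h = 0")
    case True
    thus ?thesis using ric_ok(1)[of U "3 * s"] rho0 Dt by simp
  next
    case False
    hence "norm h > 0" by simp
    thus "(norm h)\<^sup>2 \<le> norm h * ((\<rho> + ric U (3 * s)) * Dt) \<Longrightarrow> ?thesis"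
      by (simp add: power2_eq_square mult_le_cancel_left_pos)
  qed
  thus ?thesis using cardC unfolding h_def C_def Ss_def \<rho>_def by simp
qed

theorem theorem1:
  fixes U :: "real ^ 'd ^ 'n" and xs :: "real ^ 'd" and y :: "real ^ 'n" and s :: nat
    and x :: "nat \<Rightarrow> real ^ 'd" and D :: "nat \<Rightarrow> real" and lam :: "nat \<Rightarrow> real"
  assumes "2 * s \<le> CARD('d)"
    and "card (supp xs) \<le> s"
    and "y = U *v xs"
    and "ric U s + sqrt 2 * roc U s + ric U (3 * s) < 1"
    and "x 1 = 0"
    and "\<And>t. t \<ge> 1 \<Longrightarrow>
           x (Suc t) = soft (x t - transpose U *v (U *v x t - y)) (lam t)"
    and "norm (x 1 - xs) \<le> D 1"
    and "\<And>t. t \<ge> 1 \<Longrightarrow> D (Suc t) = (ric U s + sqrt 2 * roc U s + ric U (3 * s)) * D t"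
    and "\<And>t. t \<ge> 1 \<Longrightarrow> lam t = (ric U s + sqrt 2 * roc U s) / sqrt (real s) * D t"
  shows "\<forall>t. card (supp (x (t + 1)) - supp xs) \<le> s \<and>
             norm (x (t + 1) - xs) \<le> (ric U s + sqrt 2 * roc U s + ric U (3 * s)) ^ t * D 1"
proof -
  note A = assms
  define g where "g = ric U s + sqrt 2 * roc U s + ric U (3 * s)"
  have g0: "g \<ge> 0" unfolding g_def using ric_ok(1)[of U s] ric_ok(1)[of U "3 * s"] roc_ok(1)[of U s] by simp
  have D1: "D 1 \<ge> 0" using A(7) norm_ge_zero order_trans by blast
  have Dform: "D t = g ^ (t - 1) * D 1" if "t \<ge> 1" for t
    using that
  proof (induction t rule: nat_induct_at_least)
    case base then show ?case by simp
  next
    case (Suc t)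
    have "D (Suc t) = g * D t" using A(8)[OF Suc.hyps(1)] unfolding g_def .
    also have "\<dots> = g ^ (Suc t - 1) * D 1" using Suc.IH Suc.hyps(1)
      by (cases t) (auto simp: mult_ac)
    finally show ?case .
  qed
  show ?thesis
  proof (cases "s = 0")
    case True
    have "supp xs = {}" using A(2) True by simp
    hence xs0: "xs = 0" by (auto simp: supp_def vec_eq_iff)
    have x0: "x t = 0" if "t \<ge> 1" for t
      using that
    proof (induction t rule: nat_induct_at_least)
      case base then show ?case using A(5) by simp
    next
      case (Suc t)
      show ?case using A(6)[OF Suc.hyps(1)] Suc.IH A(3) xs0 by (simp add: soft_def vec_eq_iff)
    qed
    show ?thesis
    proof
      fix t
      have "x (t + 1) = 0" by (rule x0) simp
      moreover have "0 \<le> g ^ t * D 1" using g0 D1 by simp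
      ultimately show "card (supp (x (t + 1)) - supp xs) \<le> s \<and>
             norm (x (t + 1) - xs) \<le> (ric U s + sqrt 2 * roc U s + ric U (3 * s)) ^ t * D 1"
        using xs0 unfolding g_def by (simp add: supp_def)
    qed
  next
    case False
    hence sp: "s > 0" by simp
    have P: "card (supp (x t) - supp xs) \<le> s \<and> norm (x t - xs) \<le> D t" if "t \<ge> 1" for t
      using that
    proof (induction t rule: nat_induct_at_least)
      case base
      have "supp (x 1) = {}" using A(5) by (simp add: supp_def)
      then show ?case using A(7) by simp
    next
      case (Suc t)
      have "card (supp (x (Suc t)) - supp xs) \<le> s \<and>
         norm (x (Suc t) - xs) \<le> (ric U s + sqrt 2 * roc U s + ric U (3 * s)) * D t"
        by (rule step[OF A(2) sp conjunct1[OF Suc.IH] conjunct2[OF Suc.IH] A(9)[OF Suc.hyps(1)]])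
          (use A(6)[OF Suc.hyps(1)] A(3) in simp)
      then show ?case using A(8)[OF Suc.hyps(1)] by simp
    qed
    show ?thesis
    proof
      fix t
      have "D (t + 1) = g ^ t * D 1" using Dform[of "t + 1"] by simp
      thus "card (supp (x (t + 1)) - supp xs) \<le> s \<and>
             norm (x (t + 1) - xs) \<le> (ric U s + sqrt 2 * roc U s + ric U (3 * s)) ^ t * D 1"
        using P[of "t + 1"] unfolding g_def by simp
    qed
  qed
qed

end
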